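(* Under Assumption 1, almost surely, for all sufficiently large $N^*$ the true partition $\mathcal{X}^*$ is the unique minimizer of $D(\mathcal{Y})=D_1(\mathcal{Y})+D_2(\mathcal{Y})$ over all partitions $\mathcal{Y}$ of $X$; that is, $\hat{\mathcal{X}}=\arg\min_{\mathcal{Y}\in\mathscr{X}}D(\mathcal{Y})$ converges almost surely to $\mathcal{X}^*$ as $N^*\to\infty$.
   Context: $X$ is finite, $\mathscr{A}$ the nonempty subsets of $X$, $\mathscr{X}$ the set of all partitions of $X$. The true choice probabilities $\bar p$ form a nondegenerate NSC with representation $(v,u,\mathcal{X}^* )$, $\mathcal{X}^*=\{X_1,\dots,X_K\}$, $K\ge2$: $\bar p(a,A)=\frac{v(A\cap X_i)}{\sum_j v(A\cap X_j)}\frac{u(a)}{\sum_{b\in A\cap X_i}u(b)}$ for $a\in A\cap X_i$, with $u>0$, $v(\emptyset)=0$, $\bar p>0$ on $\{(a,A):a\in A\}$; nondegenerate means at most one $i$ for which some $a\in X_i$ satisfies $\frac{\sum_{x\in A_i}u(x)}{v(A_i)}=\frac{u(a)}{v(\{a\})}$ for all $A_i\subseteq X_i$ containing $a$. Data: for each menu $A$, $N_A$ independent observed choices from $A$, each drawn according to $\bar p(\cdot,A)$, independent across menus; $p(a,A)$ is the observed frequency of $a$ among the $N_A$ choices from $A$. $N^*=\min_{A\in\mathscr{A}}N_A$, and asymptotic statements refer to $N^*\to\infty$ (sample sizes increasing along nested samples). For $A'\subseteq X$ write $p(A',A)=\sum_{a\in A'}p(a,A)$, $r_A(A',B')=p(A',A)/p(B',A)$,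 and $\bar r_A(A',B')=\bar p(A',A)/\bar p(B',A)$; $r_A(a,b)=r_A(\{a\},\{b\})$. For $\mathcal{Y}\in\mathscr{X}$: $D_1(\mathcal{Y})$ is the average, over all tuples $(Y,A,B,a,b)$ with $Y\in\mathcal{Y}$, $A,B\in\mathscr{A}$, $a,b\in A\cap B\cap Y$, of $\big(\log r_A(a,b)-\log r_B(a,b)\big)^2$ (sum divided by the number of such tuples). $D_2(\mathcal{Y})$ is the average, over all tuples $(Y,Y',A,B)$ with $Y,Y'\in\mathcal{Y}$, $A,B\in\mathscr{A}$, $A\cap Y=B\cap Y\ne\emptyset$, $A\cap Y'=B\cap Y'\ne\emptyset$, of $\big(\log r_A(Y,Y')-\log r_B(Y,Y')\big)^2$. ($D$ is defined whenever all observed frequencies are positive, which holds almost surely for large $N^*$.) Assumption 1: for all distinct $i,j\le K$, every nonempty $A_i\subsetneq X_i$ and every nonempty $A_j\subseteq X_j$, there exist $A,B\in\mathscr{A}$ with $A_i\cup A_j\subseteq A\cap B$ and $\bar r_A(A_i,A_j)\ne\bar r_B(A_i,A_j)$. *)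

theory Defs
  imports "HOL-Probability.Probability" "HOL-Library.Disjoint_Sets"
begin

definition menus :: "'a set \<Rightarrow> 'a set set" where
  "menus X = {A. A \<subseteq> X \<and> A \<noteq> {}}"

definition block_of :: "'a set set \<Rightarrow> 'a \<Rightarrow> 'a set" where
  "block_of P a = (THE Y. Y \<in> P \<and> a \<in> Y)"

definition nsc :: "'a set set \<Rightarrow> ('a set \<Rightarrow> real) \<Rightarrow> ('a \<Rightarrow> real) \<Rightarrow> 'a \<Rightarrow> 'a set \<Rightarrow> real" where
  "nsc P v u a A =
     (if a \<in> A then
        v (A \<inter> block_of P a) / (\<Sum>Y\<in>P. v (A \<inter> Y))
        * (u a / (\<Sum>b\<in>A \<inter> block_of P a. u b))
      else 0)"

definition degenerate_block :: "('a set \<Rightarrow> real) \<Rightarrow> ('a \<Rightarrow> real) \<Rightarrow> 'a set \<Rightarrow> bool" where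
  "degenerate_block v u Xi \<longleftrightarrow>
     (\<exists>a\<in>Xi. \<forall>Ai. Ai \<subseteq> Xi \<and> a \<in> Ai \<longrightarrow> (\<Sum>x\<in>Ai. u x) / v Ai = u a / v {a})"

definition nondegenerate :: "'a set set \<Rightarrow> ('a set \<Rightarrow> real) \<Rightarrow> ('a \<Rightarrow> real) \<Rightarrow> bool" where
  "nondegenerate P v u \<longleftrightarrow> card {Xi \<in> P. degenerate_block v u Xi} \<le> 1"

definition setp :: "('a \<Rightarrow> 'a set \<Rightarrow> real) \<Rightarrow> 'a set \<Rightarrow> 'a set \<Rightarrow> real" where
  "setp p B A = (\<Sum>a\<in>B. p a A)"

definition ratio :: "('a \<Rightarrow> 'a set \<Rightarrow> real) \<Rightarrow> 'a set \<Rightarrow> 'a set \<Rightarrow> 'a set \<Rightarrow> real" where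
  "ratio p A B C = setp p B A / setp p C A"

definition assumption1 :: "'a set \<Rightarrow> 'a set set \<Rightarrow> ('a \<Rightarrow> 'a set \<Rightarrow> real) \<Rightarrow> bool" where
  "assumption1 X P pbar \<longleftrightarrow>
    (\<forall>Xi\<in>P. \<forall>Xj\<in>P. Xi \<noteq> Xj \<longrightarrow>
       (\<forall>Ai Aj. Ai \<noteq> {} \<and> Ai \<subset> Xi \<and> Aj \<noteq> {} \<and> Aj \<subseteq> Xj \<longrightarrow>
          (\<exists>A\<in>menus X. \<exists>B\<in>menus X. Ai \<union> Aj \<subseteq> A \<inter> B \<and>
              ratio pbar A Ai Aj \<noteq> ratio pbar B Ai Aj)))"

definition D1 :: "'a set \<Rightarrow> ('a \<Rightarrow> 'a set \<Rightarrow> real) \<Rightarrow> 'a set set \<Rightarrow> real" where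
  "D1 X p Q =
    (let T = {(Y, A, B, a, b). Y \<in> Q \<and> A \<in> menus X \<and> B \<in> menus X \<and>
                 a \<in> A \<inter> B \<inter> Y \<and> b \<in> A \<inter> B \<inter> Y}
     in (\<Sum>(Y, A, B, a, b)\<in>T. (ln (ratio p A {a} {b}) - ln (ratio p B {a} {b}))^2) / real (card T))"

definition D2 :: "'a set \<Rightarrow> ('a \<Rightarrow> 'a set \<Rightarrow> real) \<Rightarrow> 'a set set \<Rightarrow> real" where
  "D2 X p Q =
    (let T = {(Y, Y', A, B). Y \<in> Q \<and> Y' \<in> Q \<and> A \<in> menus X \<and> B \<in> menus X \<and>
                 A \<inter> Y = B \<inter> Y \<and> A \<inter> Y \<noteq> {} \<and> A \<inter> Y' = B \<inter> Y' \<and> A \<inter> Y' \<noteq> {}}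
     in (\<Sum>(Y, Y', A, B)\<in>T. (ln (ratio p A Y Y') - ln (ratio p B Y Y'))^2) / real (card T))"

definition D :: "'a set \<Rightarrow> ('a \<Rightarrow> 'a set \<Rightarrow> real) \<Rightarrow> 'a set set \<Rightarrow> real" where
  "D X p Q = D1 X p Q + D2 X p Q"

(* Observed frequency of a among the first N A draws xi A 0, ..., xi A (N A - 1) from menu A *)
definition freq :: "('a set \<Rightarrow> nat \<Rightarrow> 'w \<Rightarrow> 'a) \<Rightarrow> ('a set \<Rightarrow> nat) \<Rightarrow> 'w \<Rightarrow> 'a \<Rightarrow> 'a set \<Rightarrow> real" where
  "freq xi N w a A = real (card {n. n < N A \<and> xi A n w = a}) / real (N A)"

end

theory Submission
  imports Defs
begin


lemma slln_indicator:
  fixes Z :: "'i \<Rightarrow> 'w \<Rightarrow> 'a" and g :: "nat \<Rightarrow> 'i"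
  assumes ps: "prob_space M"
    and ind: "prob_space.indep_vars M (\<lambda>_. count_space S) Z I"
    and injg: "inj g" and rg: "range g \<subseteq> I"
    and q: "\<And>n. measure M {w \<in> space M. Z (g n) w = a} = q"
  shows "AE w in M. (\<lambda>n. real (card {k. k < n \<and> Z (g k) w = a}) / real n) \<longlonglongrightarrow> q"
proof -
  interpret prob_space M by fact
  define F where "F = (\<lambda>i w. indicator {a} (Z i w) :: real)"
  have indF: "indep_vars (\<lambda>_. borel) F I"
    unfolding F_def by (rule indep_vars_compose2[OF ind]) auto
  have rvZ: "Z i \<in> measurable M (count_space S)" if "i \<in> I" for i
    using ind that unfolding indep_vars_def by blast
  have measF[measurable]: "F i \<in> borel_measurable M" if "i \<in> I" for i
    using indF that unfolding indep_vars_def by blast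
  have EF: "expectation (F (g n)) = q" for n
  proof -
    have "expectation (F (g n)) = expectation (indicator {w \<in> space M. Z (g n) w = a})"
      by (intro Bochner_Integration.integral_cong) (auto simp: F_def indicator_def)
    also have "\<dots> = q"
    proof -
      have gI: "g n \<in> I" using rg by auto
      have "{w \<in> space M. Z (g n) w = a} = Z (g n) -` ({a} \<inter> S) \<inter> space M"
        using measurable_space[OF rvZ[OF gI]] by auto
      also have "\<dots> \<in> sets M"
        by (rule measurable_sets[OF rvZ[OF gI]]) auto
      finally have "{w \<in> space M. Z (g n) w = a} \<in> sets M" .
      then show ?thesis using q[of n] by simp
    qed
    finally show ?thesis .
  qed
  define S where "S = (\<lambda>n w. \<Sum>k<n. F (g k) w)"
  have Scard: "S n w = real (card {k. k < n \<and> Z (g k) w = a})" for n w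
  proof -
    have "S n w = (\<Sum>k\<in>{k. k < n \<and> Z (g k) w = a}. 1)"
      unfolding S_def F_def by (rule sum.mono_neutral_cong_right) (auto simp: indicator_def)
    then show ?thesis by simp
  qed
  have bound: "prob {w \<in> space M. e * real n \<le> \<bar>S n w - real n * q\<bar>} \<le> 2 * exp (-2 * real n * e\<^sup>2)"
    if e: "e > 0" and n: "n > 0" for e n
  proof -
    interpret H: Hoeffding_ineq M "g ` {..<n}" F "\<lambda>_. 0" "\<lambda>_. 1" "\<Sum>i\<in>g ` {..<n}. expectation (F i)"
    proof unfold_locales
      show "indep_vars (\<lambda>_. borel) F (g ` {..<n})"
        by (rule indep_vars_subset[OF indF]) (use rg in auto)
      fix i assume "i \<in> g ` {..<n}"
      show "AE x in M. F i x \<in> {0..1}" by (auto simp: F_def)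
    qed auto
    have mu: "(\<Sum>i\<in>g ` {..<n}. expectation (F i)) = real n * q"
      using injg by (simp add: sum.reindex inj_on_def EF)
    have sumeq: "(\<Sum>i\<in>g ` {..<n}. F i w) = S n w" for w
      using injg by (simp add: sum.reindex inj_on_def S_def)
    have cardg: "card (g ` {..<n}) = n"
      using injg by (simp add: card_image inj_on_def)
    have pos: "(\<Sum>i\<in>g ` {..<n}. (1 - 0::real)\<^sup>2) = real n"
      using cardg by simp
    have "prob {w \<in> space M. \<bar>(\<Sum>i\<in>g ` {..<n}. F i w) - (\<Sum>i\<in>g ` {..<n}. expectation (F i))\<bar> \<ge> e * real n}
          \<le> 2 * exp (-2 * (e * real n)\<^sup>2 / (\<Sum>i\<in>g ` {..<n}. (1 - 0)\<^sup>2))"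
      by (rule H.Hoeffding_ineq_abs_ge) (use e n pos in auto)
    also have "-2 * (e * real n)\<^sup>2 / (\<Sum>i\<in>g ` {..<n}. (1 - 0)\<^sup>2) = -2 * real n * e\<^sup>2"
      using n by (simp add: cardg power2_eq_square field_simps)
    finally show ?thesis by (simp add: mu sumeq abs_minus_commute)
  qed
  have ev: "AE w in M. eventually (\<lambda>n. \<bar>S n w / real n - q\<bar> < e) sequentially" if e: "e > 0" for e
  proof -
    define E where "E = (\<lambda>n. {w \<in> space M. e * real (Suc n) \<le> \<bar>S (Suc n) w - real (Suc n) * q\<bar>})"
    have measS[measurable]: "S n \<in> borel_measurable M" for n
      unfolding S_def using rg by (auto intro!: borel_measurable_sum measF)
    have Emeas: "E n \<in> sets M" for n unfolding E_def by measurable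
    have summ: "summable (\<lambda>n. measure M (E n))"
    proof (rule summable_comparison_test')
      show "summable (\<lambda>n. 2 * exp (-2 * e\<^sup>2) ^ Suc n)"
        using e by (intro summable_mult summable_Suc_iff[THEN iffD2] summable_geometric) auto
      fix n :: nat
      have "measure M (E n) \<le> 2 * exp (-2 * real (Suc n) * e\<^sup>2)"
        unfolding E_def by (rule bound) (use e in auto)
      also have "exp (-2 * real (Suc n) * e\<^sup>2) = exp (-2 * e\<^sup>2) ^ Suc n"
        by (simp add: exp_of_nat_mult[symmetric] mult_ac)
           (simp add: exp_add[symmetric] algebra_simps)
      finally show "norm (measure M (E n)) \<le> 2 * exp (-2 * e\<^sup>2) ^ Suc n" by simp
    qed
    have "AE w in M. eventually (\<lambda>n. w \<in> space M - E n) sequentially"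
      by (rule borel_cantelli_AE1) (use Emeas summ in \<open>auto simp: emeasure_eq_measure\<close>)
    then show ?thesis
    proof (rule AE_mp, intro AE_I2 impI)
      fix w assume w: "w \<in> space M" and evn: "eventually (\<lambda>n. w \<in> space M - E n) sequentially"
      have "eventually (\<lambda>n. \<bar>S (Suc n) w / real (Suc n) - q\<bar> < e) sequentially"
      proof (rule eventually_mono[OF evn])
        fix n assume "w \<in> space M - E n"
        then have "\<bar>S (Suc n) w - real (Suc n) * q\<bar> < e * real (Suc n)"
          using w by (auto simp: E_def)
        also have "\<bar>S (Suc n) w - real (Suc n) * q\<bar> = real (Suc n) * \<bar>S (Suc n) w / real (Suc n) - q\<bar>"
          by (simp add: field_simps abs_mult[symmetric] del: of_nat_Suc)
        finally show "\<bar>S (Suc n) w / real (Suc n) - q\<bar> < e"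
          by (simp add: mult.commute del: of_nat_Suc)
      qed
      then show "eventually (\<lambda>n. \<bar>S n w / real n - q\<bar> < e) sequentially"
        by (subst eventually_sequentially_Suc[symmetric]) simp
    qed
  qed
  have "AE w in M. \<forall>m::nat. eventually (\<lambda>n. \<bar>S n w / real n - q\<bar> < 1 / real (Suc m)) sequentially"
    by (subst AE_all_countable) (auto intro: ev)
  then show ?thesis
  proof (rule AE_mp, intro AE_I2 impI)
    fix w assume H: "\<forall>m::nat. eventually (\<lambda>n. \<bar>S n w / real n - q\<bar> < 1 / real (Suc m)) sequentially"
    show "(\<lambda>n. real (card {k. k < n \<and> Z (g k) w = a}) / real n) \<longlonglongrightarrow> q"
    proof (rule LIMSEQ_I)
      fix r :: real assume r: "r > 0"
      obtain m :: nat where m: "1 / real (Suc m) < r"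
        using r by (metis nat_approx_posE)
      from H[rule_format, of m] obtain N where N: "\<forall>n\<ge>N. \<bar>S n w / real n - q\<bar> < 1 / real (Suc m)"
        by (auto simp: eventually_sequentially)
      show "\<exists>N. \<forall>n\<ge>N. norm (real (card {k. k < n \<and> Z (g k) w = a}) / real n - q) < r"
      proof (intro exI allI impI)
        fix n assume "n \<ge> N"
        then have "\<bar>S n w / real n - q\<bar> < 1 / real (Suc m)" using N by blast
        then have "\<bar>S n w / real n - q\<bar> < r" using m by linarith
        then show "norm (real (card {k. k < n \<and> Z (g k) w = a}) / real n - q) < r"
          by (simp add: Scard)
      qed
    qed
  qed
qed



lemma block_of_eq:
  assumes "partition_on X P" "Y \<in> P" "a \<in> Y"
  shows "block_of P a = Y"
  unfolding block_of_def
proof (rule the_equality)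
  show "Y \<in> P \<and> a \<in> Y" using assms by auto
  fix Z assume "Z \<in> P \<and> a \<in> Z"
  then have "a \<in> Z \<inter> Y" "Z \<in> P" using assms by auto
  then show "Z = Y" using disjointD[OF partition_onD2[OF assms(1)] _ assms(2)] by blast
qed

lemma menus_finite: "finite X \<Longrightarrow> finite (menus X)"
  unfolding menus_def by (rule finite_subset[of _ "Pow X"]) auto

lemma nsc_nonneg:
  assumes pos: "\<forall>A\<in>menus X. \<forall>a\<in>A. nsc P v u a A > 0" and "A \<in> menus X"
  shows "nsc P v u a A \<ge> 0"
proof (cases "a \<in> A")
  case True then show ?thesis using assms by (auto intro: less_imp_le)
qed (simp add: nsc_def)

lemma setp_pos:
  assumes finX: "finite X" and pos: "\<forall>A\<in>menus X. \<forall>a\<in>A. nsc P v u a A > 0"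
    and A: "A \<in> menus X" and Y: "Y \<subseteq> X" and ne: "A \<inter> Y \<noteq> {}"
  shows "setp (nsc P v u) Y A > 0"
proof -
  obtain a where a: "a \<in> A \<inter> Y" using ne by auto
  show ?thesis unfolding setp_def
  proof (rule sum_pos2[of Y a])
    show "finite Y" using finite_subset[OF Y finX] .
    show "a \<in> Y" using a by simp
    show "0 < nsc P v u a A" using pos A a by blast
    show "\<And>i. i \<in> Y \<Longrightarrow> 0 \<le> nsc P v u i A" using nsc_nonneg[OF pos A] by blast
  qed
qed

lemma sum_block:
  assumes finX: "finite X" and part: "partition_on X P" and upos: "\<forall>a\<in>X. u a > 0"
    and v0: "v {} = 0"
    and A: "A \<in> menus X" and Y: "Y \<in> P"
  shows "(\<Sum>a\<in>A \<inter> Y. nsc P v u a A) = v (A \<inter> Y) / (\<Sum>Z\<in>P. v (A \<inter> Z))"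
proof (cases "A \<inter> Y = {}")
  case True then show ?thesis using v0 by simp
next
  case False
  have YX: "Y \<subseteq> X" using part Y by (auto simp: partition_on_def)
  have AX: "A \<subseteq> X" using A by (auto simp: menus_def)
  have finAY: "finite (A \<inter> Y)" using finite_subset[OF YX finX] by simp
  define U where "U = (\<Sum>b\<in>A \<inter> Y. u b)"
  have Upos: "U > 0" unfolding U_def
    using False finAY upos AX by (intro sum_pos) auto
  have "(\<Sum>a\<in>A \<inter> Y. nsc P v u a A) = (\<Sum>a\<in>A \<inter> Y. v (A \<inter> Y) / (\<Sum>Z\<in>P. v (A \<inter> Z)) * (u a / U))"
    by (rule sum.cong) (use block_of_eq[OF part Y] in \<open>auto simp: nsc_def U_def\<close>)
  also have "\<dots> = v (A \<inter> Y) / (\<Sum>Z\<in>P. v (A \<inter> Z)) * ((\<Sum>a\<in>A \<inter> Y. u a) / U)"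
    by (simp add: sum_distrib_left sum_divide_distrib)
  also have "\<dots> = v (A \<inter> Y) / (\<Sum>Z\<in>P. v (A \<inter> Z))"
    using Upos by (simp add: U_def)
  finally show ?thesis .
qed

lemma setp_block:
  assumes finX: "finite X" and part: "partition_on X P" and upos: "\<forall>a\<in>X. u a > 0"
    and v0: "v {} = 0"
    and A: "A \<in> menus X" and Y: "Y \<in> P"
  shows "setp (nsc P v u) Y A = v (A \<inter> Y) / (\<Sum>Z\<in>P. v (A \<inter> Z))"
proof -
  have YX: "Y \<subseteq> X" using part Y by (auto simp: partition_on_def)
  have "setp (nsc P v u) Y A = (\<Sum>a\<in>A \<inter> Y. nsc P v u a A)"
    unfolding setp_def
    by (rule sum.mono_neutral_right) (use finite_subset[OF YX finX] in \<open>auto simp: nsc_def\<close>)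
  then show ?thesis using sum_block[of X P u v A Y, OF finX part upos v0 A Y] by simp
qed

lemma nsc_sum_one:
  assumes finX: "finite X" and part: "partition_on X P" and upos: "\<forall>a\<in>X. u a > 0"
    and v0: "v {} = 0" and pos: "\<forall>A\<in>menus X. \<forall>a\<in>A. nsc P v u a A > 0"
    and A: "A \<in> menus X"
  shows "(\<Sum>a\<in>A. nsc P v u a A) = 1"
proof -
  have AX: "A \<subseteq> X" using A by (auto simp: menus_def)
  have finP: "finite P" using part finX
    by (intro finite_subset[of P "Pow X"]) (auto simp: partition_on_def)
  have Aeq: "A = (\<Union>Y\<in>P. A \<inter> Y)" using part AX by (auto simp: partition_on_def)
  have "(\<Sum>a\<in>A. nsc P v u a A) = (\<Sum>Y\<in>P. \<Sum>a\<in>A \<inter> Y. nsc P v u a A)"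
  proof -
    have "(\<Sum>a\<in>(\<Union>Y\<in>P. A \<inter> Y). nsc P v u a A) = (\<Sum>Y\<in>P. \<Sum>a\<in>A \<inter> Y. nsc P v u a A)"
    proof (rule sum.UNION_disjoint[OF finP])
      show "\<forall>Y\<in>P. finite (A \<inter> Y)" using finite_subset[OF AX finX] by simp
      show "\<forall>Y\<in>P. \<forall>Z\<in>P. Y \<noteq> Z \<longrightarrow> A \<inter> Y \<inter> (A \<inter> Z) = {}"
        using disjointD[OF partition_onD2[OF part]] by blast
    qed
    then show ?thesis using Aeq by simp
  qed
  also have "\<dots> = (\<Sum>Y\<in>P. v (A \<inter> Y) / (\<Sum>Z\<in>P. v (A \<inter> Z)))"
    by (rule sum.cong) (use sum_block[of X P u v A, OF finX part upos v0 A] in auto)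
  also have "\<dots> = (\<Sum>Y\<in>P. v (A \<inter> Y)) / (\<Sum>Z\<in>P. v (A \<inter> Z))"
    by (rule sum_divide_distrib[symmetric])
  also have "\<dots> = 1"
  proof -
    obtain a where a: "a \<in> A" using A by (auto simp: menus_def)
    have "(\<Sum>Z\<in>P. v (A \<inter> Z)) \<noteq> 0"
    proof
      assume S0: "(\<Sum>Z\<in>P. v (A \<inter> Z)) = 0"
      have "nsc P v u a A > 0" using pos A a by auto
      then show False using S0 a by (simp add: nsc_def)
    qed
    then show ?thesis by (rule divide_self)
  qed
  finally show ?thesis .
qed

lemma block_of_mem:
  assumes "partition_on X P" "a \<in> X"
  shows "block_of P a \<in> P \<and> a \<in> block_of P a"
proof -
  obtain Y where "Y \<in> P" "a \<in> Y" using assms by (auto simp: partition_on_def)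
  then show ?thesis using block_of_eq[OF assms(1)] by auto
qed

lemma avg_pos:
  fixes f :: "'b \<Rightarrow> real"
  assumes "finite T" "t \<in> T" "\<And>x. x \<in> T \<Longrightarrow> f x \<ge> 0" "f t > 0"
  shows "sum f T / real (card T) > 0"
proof -
  have "sum f T > 0" by (rule sum_pos2[of T t]) (use assms in auto)
  moreover have "card T > 0" using assms by (auto simp: card_gt_0_iff)
  ultimately show ?thesis by simp
qed

lemma avg_pos5:
  fixes g :: "'a \<Rightarrow> 'b \<Rightarrow> 'c \<Rightarrow> 'd \<Rightarrow> 'e \<Rightarrow> real"
  assumes "finite {(Y, A, B, a, b). Q Y A B a b}" "Q Yw Aw Bw aw bw"
    "\<And>Y A B a b. 0 \<le> g Y A B a b" "g Yw Aw Bw aw bw > 0"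
  shows "(\<Sum>(Y, A, B, a, b)\<in>{(Y, A, B, a, b). Q Y A B a b}. g Y A B a b) /
           real (card {(Y, A, B, a, b). Q Y A B a b}) > 0"
proof (rule avg_pos[where t = "(Yw, Aw, Bw, aw, bw)"])
  show "finite {(Y, A, B, a, b). Q Y A B a b}" by (rule assms(1))
  show "(Yw, Aw, Bw, aw, bw) \<in> {(Y, A, B, a, b). Q Y A B a b}" using assms(2) by simp
  show "0 \<le> (case x of (Y, A, B, a, b) \<Rightarrow> g Y A B a b)" for x
    using assms(3) by (simp add: case_prod_beta)
  show "0 < (case (Yw, Aw, Bw, aw, bw) of (Y, A, B, a, b) \<Rightarrow> g Y A B a b)" using assms(4) by simp
qed

lemma avg_pos4:
  fixes g :: "'a \<Rightarrow> 'b \<Rightarrow> 'c \<Rightarrow> 'd \<Rightarrow> real"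
  assumes "finite {(Y, Y', A, B). Q Y Y' A B}" "Q Yw Yw' Aw Bw"
    "\<And>Y Y' A B. 0 \<le> g Y Y' A B" "g Yw Yw' Aw Bw > 0"
  shows "(\<Sum>(Y, Y', A, B)\<in>{(Y, Y', A, B). Q Y Y' A B}. g Y Y' A B) /
           real (card {(Y, Y', A, B). Q Y Y' A B}) > 0"
proof (rule avg_pos[where t = "(Yw, Yw', Aw, Bw)"])
  show "finite {(Y, Y', A, B). Q Y Y' A B}" by (rule assms(1))
  show "(Yw, Yw', Aw, Bw) \<in> {(Y, Y', A, B). Q Y Y' A B}" using assms(2) by simp
  show "0 \<le> (case x of (Y, Y', A, B) \<Rightarrow> g Y Y' A B)" for x
    using assms(3) by (simp add: case_prod_beta)
  show "0 < (case (Yw, Yw', Aw, Bw) of (Y, Y', A, B) \<Rightarrow> g Y Y' A B)" using assms(4) by simp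
qed

lemma fin5:
  assumes "finite S1" "finite S2" "finite S3" "finite S4" "finite S5"
    "\<And>Y A B a b. Q Y A B a b \<Longrightarrow> Y \<in> S1 \<and> A \<in> S2 \<and> B \<in> S3 \<and> a \<in> S4 \<and> b \<in> S5"
  shows "finite {(Y, A, B, a, b). Q Y A B a b}"
  by (rule finite_subset[of _ "S1 \<times> S2 \<times> S3 \<times> S4 \<times> S5"]) (use assms in auto)

lemma fin4:
  assumes "finite S1" "finite S2" "finite S3" "finite S4"
    "\<And>Y Y' A B. Q Y Y' A B \<Longrightarrow> Y \<in> S1 \<and> Y' \<in> S2 \<and> A \<in> S3 \<and> B \<in> S4"
  shows "finite {(Y, Y', A, B). Q Y Y' A B}"
  by (rule finite_subset[of _ "S1 \<times> S2 \<times> S3 \<times> S4"]) (use assms in auto)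

lemma D1_nonneg: "D1 X p Q \<ge> 0"
  unfolding D1_def Let_def
  by (intro divide_nonneg_nonneg sum_nonneg) (auto split: prod.splits)

lemma D2_nonneg: "D2 X p Q \<ge> 0"
  unfolding D2_def Let_def
  by (intro divide_nonneg_nonneg sum_nonneg) (auto split: prod.splits)

lemma ln_sq_pos:
  fixes x y :: real
  assumes "x > 0" "y > 0" "x \<noteq> y"
  shows "(ln x - ln y)\<^sup>2 > 0"
  using assms by auto

lemma ratio_within:
  assumes finX: "finite X" and part: "partition_on X P" and upos: "\<forall>a\<in>X. u a > 0"
    and pos: "\<forall>A\<in>menus X. \<forall>a\<in>A. nsc P v u a A > 0"
    and A: "A \<in> menus X" and Y: "Y \<in> P" and a: "a \<in> A \<inter> Y" and b: "b \<in> A \<inter> Y"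
  shows "ratio (nsc P v u) A {a} {b} = u a / u b"
proof -
  have YX: "Y \<subseteq> X" using part Y by (auto simp: partition_on_def)
  define c where "c = v (A \<inter> Y) / (\<Sum>Z\<in>P. v (A \<inter> Z))"
  define U where "U = (\<Sum>x\<in>A \<inter> Y. u x)"
  have na: "nsc P v u a A = c * (u a / U)"
    using a block_of_eq[OF part Y] by (simp add: nsc_def c_def U_def)
  have nb: "nsc P v u b A = c * (u b / U)"
    using b block_of_eq[OF part Y] by (simp add: nsc_def c_def U_def)
  have "nsc P v u a A > 0" using pos A a by auto
  then have "c \<noteq> 0" "U \<noteq> 0" using na by auto
  moreover have "u b > 0" using upos b YX by auto
  ultimately show ?thesis
    by (simp add: ratio_def setp_def na nb field_simps)
qed

lemma ratio_blocks:
  assumes finX: "finite X" and part: "partition_on X P" and upos: "\<forall>a\<in>X. u a > 0"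
    and v0: "v {} = 0"
    and pos: "\<forall>A\<in>menus X. \<forall>a\<in>A. nsc P v u a A > 0"
    and A: "A \<in> menus X" and Y: "Y \<in> P" and Y': "Y' \<in> P" and ne: "A \<inter> Y \<noteq> {}"
  shows "ratio (nsc P v u) A Y Y' = v (A \<inter> Y) / v (A \<inter> Y')"
proof -
  have YX: "Y \<subseteq> X" using part Y by (auto simp: partition_on_def)
  have "setp (nsc P v u) Y A > 0" by (rule setp_pos[OF finX pos A YX ne])
  then have S: "(\<Sum>Z\<in>P. v (A \<inter> Z)) \<noteq> 0"
    using setp_block[of X P u v A Y, OF finX part upos v0 A Y] by auto
  show ?thesis
    unfolding ratio_def
    using setp_block[of X P u v A Y, OF finX part upos v0 A Y]
      setp_block[of X P u v A Y', OF finX part upos v0 A Y'] S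
    by simp
qed

lemma sum_zero5:
  assumes "\<And>Y A B a b. Q Y A B a b \<Longrightarrow> g Y A B a b = 0"
  shows "(\<Sum>(Y, A, B, a, b)\<in>{(Y, A, B, a, b). Q Y A B a b}. g Y A B a b) / c = (0::real)"
proof -
  have "(\<Sum>(Y, A, B, a, b)\<in>{(Y, A, B, a, b). Q Y A B a b}. g Y A B a b) = 0"
    by (rule sum.neutral) (auto simp: assms)
  then show ?thesis by simp
qed

lemma sum_zero4:
  assumes "\<And>Y Y' A B. Q Y Y' A B \<Longrightarrow> g Y Y' A B = 0"
  shows "(\<Sum>(Y, Y', A, B)\<in>{(Y, Y', A, B). Q Y Y' A B}. g Y Y' A B) / c = (0::real)"
proof -
  have "(\<Sum>(Y, Y', A, B)\<in>{(Y, Y', A, B). Q Y Y' A B}. g Y Y' A B) = 0"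
    by (rule sum.neutral) (auto simp: assms)
  then show ?thesis by simp
qed

lemma D_true_zero:
  assumes finX: "finite X" and part: "partition_on X P" and upos: "\<forall>a\<in>X. u a > 0"
    and v0: "v {} = 0"
    and pos: "\<forall>A\<in>menus X. \<forall>a\<in>A. nsc P v u a A > 0"
  shows "D X (nsc P v u) P = 0"
proof -
  have "D1 X (nsc P v u) P = 0"
    unfolding D1_def Let_def
  proof (rule sum_zero5)
    fix Y A B a b assume H0: "Y \<in> P \<and> A \<in> menus X \<and> B \<in> menus X \<and> a \<in> A \<inter> B \<inter> Y \<and> b \<in> A \<inter> B \<inter> Y"
    then have H: "Y \<in> P" "A \<in> menus X" "B \<in> menus X" "a \<in> A \<inter> Y" "b \<in> A \<inter> Y" "a \<in> B \<inter> Y" "b \<in> B \<inter> Y"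
      by auto
    show "(ln (ratio (nsc P v u) A {a} {b}) - ln (ratio (nsc P v u) B {a} {b}))\<^sup>2 = 0"
      using ratio_within[OF finX part upos pos H(2) H(1) H(4) H(5)]
        ratio_within[OF finX part upos pos H(3) H(1) H(6) H(7)] by simp
  qed
  moreover have "D2 X (nsc P v u) P = 0"
    unfolding D2_def Let_def
  proof (rule sum_zero4)
    fix Y Y' A B assume H0: "Y \<in> P \<and> Y' \<in> P \<and> A \<in> menus X \<and> B \<in> menus X \<and> A \<inter> Y = B \<inter> Y \<and>
      A \<inter> Y \<noteq> {} \<and> A \<inter> Y' = B \<inter> Y' \<and> A \<inter> Y' \<noteq> {}"
    then have H: "Y \<in> P" "Y' \<in> P" "A \<in> menus X" "B \<in> menus X" "A \<inter> Y = B \<inter> Y"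
      "A \<inter> Y' = B \<inter> Y'" "A \<inter> Y \<noteq> {}" "B \<inter> Y \<noteq> {}"
      by auto
    show "(ln (ratio (nsc P v u) A Y Y') - ln (ratio (nsc P v u) B Y Y'))\<^sup>2 = 0"
      using ratio_blocks[OF finX part upos v0 pos H(3) H(1) H(2) H(7)]
        ratio_blocks[OF finX part upos v0 pos H(4) H(1) H(2) H(8)] H(5,6) by simp
  qed
  ultimately show ?thesis by (simp add: D_def)
qed

lemma singleton_degenerate: "degenerate_block v u {a}"
  unfolding degenerate_block_def
proof (rule bexI[of _ a], safe)
  fix Ai assume "Ai \<subseteq> {a}" "a \<in> Ai"
  then have "Ai = {a}" by auto
  then show "sum u Ai / v Ai = u a / v {a}" by simp
qed

lemma A1_inst:
  assumes "assumption1 X P p" "Xi \<in> P" "Xj \<in> P" "Xi \<noteq> Xj" "Ai \<noteq> {}" "Ai \<subset> Xi"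
    "Aj \<noteq> {}" "Aj \<subseteq> Xj"
  shows "\<exists>A\<in>menus X. \<exists>B\<in>menus X. Ai \<union> Aj \<subseteq> A \<inter> B \<and> ratio p A Ai Aj \<noteq> ratio p B Ai Aj"
proof -
  have c: "Ai \<noteq> {} \<and> Ai \<subset> Xi \<and> Aj \<noteq> {} \<and> Aj \<subseteq> Xj" using assms(5-8) by simp
  show ?thesis by (rule assms(1)[unfolded assumption1_def, rule_format, OF assms(2,3,4) c])
qed

lemma ratio_swap: "ratio p A B C = inverse (ratio p A C B)"
  by (simp add: ratio_def)

lemma D_other_pos:
  assumes finX: "finite X" and part: "partition_on X P" and K2: "card P \<ge> 2"
    and upos: "\<forall>a\<in>X. u a > 0"
    and v0: "v {} = 0"
    and pos: "\<forall>A\<in>menus X. \<forall>a\<in>A. nsc P v u a A > 0"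
    and nondeg: "nondegenerate P v u"
    and A1: "assumption1 X P (nsc P v u)"
    and Qp: "partition_on X Q" and QP: "Q \<noteq> P"
  shows "D X (nsc P v u) Q > 0"
proof -
  let ?p = "nsc P v u"
  have finP: "finite P" using part finX
    by (intro finite_subset[of P "Pow X"]) (auto simp: partition_on_def)
  have finQ: "finite Q" using Qp finX
    by (intro finite_subset[of Q "Pow X"]) (auto simp: partition_on_def)
  have finM: "finite (menus X)" using finX by (rule menus_finite)
  have QX: "\<And>Y. Y \<in> Q \<Longrightarrow> Y \<subseteq> X" using Qp by (auto simp: partition_on_def)
  have PX: "\<And>Y. Y \<in> P \<Longrightarrow> Y \<subseteq> X" using part by (auto simp: partition_on_def)
  have rpos: "ratio ?p A B C > 0" if "A \<in> menus X" "B \<subseteq> X" "C \<subseteq> X" "A \<inter> B \<noteq> {}" "A \<inter> C \<noteq> {}" for A B C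
    unfolding ratio_def using setp_pos[OF finX pos that(1) that(2) that(4)] setp_pos[OF finX pos that(1) that(3) that(5)]
    by simp
  show ?thesis
  proof (cases "\<exists>Y\<in>Q. \<exists>a\<in>Y. \<exists>b\<in>Y. block_of P a \<noteq> block_of P b")
    case True
    then obtain Y a b where Y: "Y \<in> Q" and a: "a \<in> Y" and b: "b \<in> Y" and ne: "block_of P a \<noteq> block_of P b"
      by blast
    have aX: "a \<in> X" and bX: "b \<in> X" using QX[OF Y] a b by auto
    define X1 where "X1 = block_of P a"
    define X2 where "X2 = block_of P b"
    have X1: "X1 \<in> P" "a \<in> X1" using block_of_mem[OF part aX] by (auto simp: X1_def)
    have X2: "X2 \<in> P" "b \<in> X2" using block_of_mem[OF part bX] by (auto simp: X2_def)
    have ne': "X1 \<noteq> X2" using ne by (simp add: X1_def X2_def)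
    have "\<exists>A\<in>menus X. \<exists>B\<in>menus X. {a} \<union> {b} \<subseteq> A \<inter> B \<and> ratio ?p A {a} {b} \<noteq> ratio ?p B {a} {b}"
    proof (cases "X1 = {a}")
      case False
      then have "{a} \<subset> X1" using X1 by auto
      then show ?thesis using A1_inst[OF A1 X1(1) X2(1) ne', of "{a}" "{b}"] X2 by auto
    next
      case X1a: True
      show ?thesis
      proof (cases "X2 = {b}")
        case False
        then have "{b} \<subset> X2" using X2 by auto
        then obtain A B where AB: "A \<in> menus X" "B \<in> menus X" "{b} \<union> {a} \<subseteq> A \<inter> B"
          "ratio ?p A {b} {a} \<noteq> ratio ?p B {b} {a}"
          using A1_inst[OF A1 X2(1) X1(1) ne'[symmetric], of "{b}" "{a}"] X1 by auto
        then have "ratio ?p A {a} {b} \<noteq> ratio ?p B {a} {b}"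
          using ratio_swap[of ?p A "{a}" "{b}"] ratio_swap[of ?p B "{a}" "{b}"] by simp
        then show ?thesis using AB by blast
      next
        case True
        have "{X1, X2} \<subseteq> {Xi \<in> P. degenerate_block v u Xi}"
          using X1 X2 X1a True singleton_degenerate by auto
        then have "card {X1, X2} \<le> card {Xi \<in> P. degenerate_block v u Xi}"
          by (rule card_mono[rotated]) (use finP in auto)
        then show ?thesis using nondeg ne' by (simp add: nondegenerate_def)
      qed
    qed
    then obtain A B where AB: "A \<in> menus X" "B \<in> menus X" "a \<in> A" "a \<in> B" "b \<in> A" "b \<in> B"
      and rne: "ratio ?p A {a} {b} \<noteq> ratio ?p B {a} {b}" by auto
    have "D1 X ?p Q > 0"
      unfolding D1_def Let_def
      apply (rule avg_pos5[where Yw=Y and Aw=A and Bw=B and aw=a and bw=b])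
      subgoal by (rule fin5[OF finQ finM finM finX finX]) (use QX in blast)
      subgoal using Y AB a b by blast
      subgoal by simp
      subgoal
      proof -
        have "ratio ?p A {a} {b} > 0" "ratio ?p B {a} {b} > 0"
          using rpos[of A "{a}" "{b}"] rpos[of B "{a}" "{b}"] AB aX bX by auto
        then show ?thesis using rne by (simp add: ln_sq_pos)
      qed
      done
    then show ?thesis using D2_nonneg[of X ?p Q] by (simp add: D_def)
  next
    case False
    have sub: "Y \<subseteq> block_of P a" if YQ: "Y \<in> Q" and aY: "a \<in> Y" for Y a
    proof
      fix b assume bY: "b \<in> Y"
      have eq: "block_of P a = block_of P b" using False YQ aY bY by blast
      have "b \<in> X" using QX[OF YQ] bY by auto
      then have "b \<in> block_of P b" using block_of_mem[OF part] by blast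
      then show "b \<in> block_of P a" using eq by simp
    qed
    have "\<exists>Y1\<in>Q. Y1 \<notin> P"
    proof (rule ccontr)
      assume "\<not> ?thesis"
      then have QsP: "Q \<subseteq> P" by auto
      have "P \<subseteq> Q"
      proof
        fix Xi assume Xi: "Xi \<in> P"
        have "Xi \<noteq> {}" using part Xi by (auto simp: partition_on_def)
        then obtain x where x: "x \<in> Xi" by blast
        then have xX: "x \<in> X" using PX[OF Xi] by auto
        then obtain Y where Y: "Y \<in> Q" "x \<in> Y" using Qp by (auto simp: partition_on_def)
        have "Y \<in> P" using QsP Y by auto
        then have "block_of P x = Y" "block_of P x = Xi"
          using block_of_eq[OF part] Y x Xi by auto
        then show "Xi \<in> Q" using Y by simp
      qed
      then show False using QsP QP by auto
    qed
    then obtain Y1 where Y1: "Y1 \<in> Q" "Y1 \<notin> P" by blast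
    have "Y1 \<noteq> {}" using Y1 Qp by (auto simp: partition_on_def)
    then obtain a where a: "a \<in> Y1" by blast
    have aX: "a \<in> X" using QX[OF Y1(1)] a by auto
    define X1 where "X1 = block_of P a"
    have X1: "X1 \<in> P" "a \<in> X1" using block_of_mem[OF part aX] by (auto simp: X1_def)
    have Y1X1: "Y1 \<subset> X1" using sub[OF Y1(1) a] Y1 X1 by (auto simp: X1_def)
    obtain X2 where X2: "X2 \<in> P" "X2 \<noteq> X1"
    proof -
      have "\<not> P \<subseteq> {X1}"
      proof
        assume "P \<subseteq> {X1}"
        then have "card P \<le> card {X1}" by (intro card_mono) auto
        then show False using K2 by simp
      qed
      then show ?thesis using that by blast
    qed
    have "X2 \<noteq> {}" using X2 part by (auto simp: partition_on_def)
    then obtain b where b: "b \<in> X2" by blast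
    have bX: "b \<in> X" using PX[OF X2(1)] b by auto
    obtain Y' where Y': "Y' \<in> Q" "b \<in> Y'" using Qp bX by (auto simp: partition_on_def)
    have Y'X2: "Y' \<subseteq> X2"
      using sub[OF Y'] block_of_eq[OF part X2(1) b] by simp
    have Y1ne: "Y1 \<noteq> {}" using a by auto
    obtain A B where AB: "A \<in> menus X" "B \<in> menus X" "Y1 \<union> Y' \<subseteq> A \<inter> B"
      and rne: "ratio ?p A Y1 Y' \<noteq> ratio ?p B Y1 Y'"
    proof -
      have "Y' \<noteq> {}" using Y' by auto
      from A1_inst[OF A1 X1(1) X2(1) X2(2)[symmetric] Y1ne Y1X1 this Y'X2]
      show ?thesis using that by blast
    qed
    have AY1: "A \<inter> Y1 = Y1" "B \<inter> Y1 = Y1" "A \<inter> Y' = Y'" "B \<inter> Y' = Y'" using AB by auto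
    have "D2 X ?p Q > 0"
      unfolding D2_def Let_def
      apply (rule avg_pos4[where Yw=Y1 and Yw'=Y' and Aw=A and Bw=B])
      subgoal by (rule fin4[OF finQ finQ finM finM]) blast
      subgoal using Y1 Y' AB AY1 Y1ne by auto
      subgoal by simp
      subgoal
      proof -
        have "ratio ?p A Y1 Y' > 0" "ratio ?p B Y1 Y' > 0"
          using rpos[of A Y1 Y'] rpos[of B Y1 Y'] AB AY1 Y1ne Y' QX[OF Y1(1)] QX[OF Y'(1)] by auto
        then show ?thesis using rne by (simp add: ln_sq_pos)
      qed
      done
    then show ?thesis using D1_nonneg[of X ?p Q] by (simp add: D_def)
  qed
qed



lemma tendsto_div_const: "(f \<longlongrightarrow> l) F \<Longrightarrow> ((\<lambda>x. f x / c) \<longlongrightarrow> l / (c::real)) F"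
  by (simp add: divide_inverse tendsto_mult_right)

lemma tendsto_sum5:
  assumes "\<And>Y A B a b. Q Y A B a b \<Longrightarrow> ((\<lambda>x. f x Y A B a b) \<longlongrightarrow> (l Y A B a b :: real)) F"
  shows "((\<lambda>x. \<Sum>(Y, A, B, a, b)\<in>{(Y, A, B, a, b). Q Y A B a b}. f x Y A B a b) \<longlongrightarrow>
           (\<Sum>(Y, A, B, a, b)\<in>{(Y, A, B, a, b). Q Y A B a b}. l Y A B a b)) F"
  apply (rule tendsto_sum)
  subgoal for t by (cases t) (simp add: assms)
  done

lemma tendsto_sum4:
  assumes "\<And>Y Y' A B. Q Y Y' A B \<Longrightarrow> ((\<lambda>x. f x Y Y' A B) \<longlongrightarrow> (l Y Y' A B :: real)) F"
  shows "((\<lambda>x. \<Sum>(Y, Y', A, B)\<in>{(Y, Y', A, B). Q Y Y' A B}. f x Y Y' A B) \<longlongrightarrow>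
           (\<Sum>(Y, Y', A, B)\<in>{(Y, Y', A, B). Q Y Y' A B}. l Y Y' A B)) F"
  apply (rule tendsto_sum)
  subgoal for t by (cases t) (simp add: assms)
  done

lemma ratio_tendsto:
  assumes lim: "\<forall>A\<in>menus X. \<forall>a\<in>X. ((\<lambda>x. p x a A) \<longlongrightarrow> q a A) F"
    and A: "A \<in> menus X" and B: "B \<subseteq> X" and C: "C \<subseteq> X" and nz: "setp q C A \<noteq> 0"
  shows "((\<lambda>x. ratio (p x) A B C) \<longlongrightarrow> ratio q A B C) F"
  unfolding ratio_def setp_def
proof (rule tendsto_divide)
  show "((\<lambda>x. \<Sum>a\<in>B. p x a A) \<longlongrightarrow> (\<Sum>a\<in>B. q a A)) F"
    by (rule tendsto_sum) (use lim A B in blast)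
  show "((\<lambda>x. \<Sum>a\<in>C. p x a A) \<longlongrightarrow> (\<Sum>a\<in>C. q a A)) F"
    by (rule tendsto_sum) (use lim A C in blast)
  show "(\<Sum>a\<in>C. q a A) \<noteq> 0" using nz by (simp add: setp_def)
qed

lemma lnratio_tendsto:
  assumes finX: "finite X" and pos: "\<forall>A\<in>menus X. \<forall>a\<in>A. nsc P v u a A > 0"
    and lim: "\<forall>A\<in>menus X. \<forall>a\<in>X. ((\<lambda>x. p x a A) \<longlongrightarrow> nsc P v u a A) F"
    and A: "A \<in> menus X" and B: "B \<subseteq> X" and C: "C \<subseteq> X" and nB: "A \<inter> B \<noteq> {}" and nC: "A \<inter> C \<noteq> {}"
  shows "((\<lambda>x. ln (ratio (p x) A B C)) \<longlongrightarrow> ln (ratio (nsc P v u) A B C)) F"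
proof -
  have sB: "setp (nsc P v u) B A > 0" by (rule setp_pos[OF finX pos A B nB])
  have sC: "setp (nsc P v u) C A > 0" by (rule setp_pos[OF finX pos A C nC])
  show ?thesis
  proof (rule tendsto_ln)
    show "((\<lambda>x. ratio (p x) A B C) \<longlongrightarrow> ratio (nsc P v u) A B C) F"
      by (rule ratio_tendsto[OF lim A B C]) (use sC in simp)
    show "ratio (nsc P v u) A B C \<noteq> 0" using sB sC by (simp add: ratio_def)
  qed
qed

lemma D_tendsto:
  assumes finX: "finite X" and pos: "\<forall>A\<in>menus X. \<forall>a\<in>A. nsc P v u a A > 0"
    and lim: "\<forall>A\<in>menus X. \<forall>a\<in>X. ((\<lambda>x. p x a A) \<longlongrightarrow> nsc P v u a A) F"
    and Qp: "partition_on X Q"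
  shows "((\<lambda>x. D X (p x) Q) \<longlongrightarrow> D X (nsc P v u) Q) F"
proof -
  have QX: "\<And>Y. Y \<in> Q \<Longrightarrow> Y \<subseteq> X" using Qp by (auto simp: partition_on_def)
  have L: "((\<lambda>x. ln (ratio (p x) A B C)) \<longlongrightarrow> ln (ratio (nsc P v u) A B C)) F"
    if "A \<in> menus X" "B \<subseteq> X" "C \<subseteq> X" "A \<inter> B \<noteq> {}" "A \<inter> C \<noteq> {}" for A B C
    by (rule lnratio_tendsto[OF finX pos lim that])
  have T1: "((\<lambda>x. D1 X (p x) Q) \<longlongrightarrow> D1 X (nsc P v u) Q) F"
    unfolding D1_def Let_def
  proof (intro tendsto_div_const tendsto_sum5)
    fix Y A B a b
    assume H0: "Y \<in> Q \<and> A \<in> menus X \<and> B \<in> menus X \<and> a \<in> A \<inter> B \<inter> Y \<and> b \<in> A \<inter> B \<inter> Y"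
    then have H: "A \<in> menus X" "B \<in> menus X" "{a} \<subseteq> X" "{b} \<subseteq> X" "A \<inter> {a} \<noteq> {}"
      "A \<inter> {b} \<noteq> {}" "B \<inter> {a} \<noteq> {}" "B \<inter> {b} \<noteq> {}"
      using QX by auto
    show "((\<lambda>x. (ln (ratio (p x) A {a} {b}) - ln (ratio (p x) B {a} {b}))\<^sup>2) \<longlongrightarrow>
           (ln (ratio (nsc P v u) A {a} {b}) - ln (ratio (nsc P v u) B {a} {b}))\<^sup>2) F"
      by (intro tendsto_power tendsto_diff L) (use H in auto)
  qed
  have T2: "((\<lambda>x. D2 X (p x) Q) \<longlongrightarrow> D2 X (nsc P v u) Q) F"
    unfolding D2_def Let_def
  proof (intro tendsto_div_const tendsto_sum4)
    fix Y Y' A B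
    assume H0: "Y \<in> Q \<and> Y' \<in> Q \<and> A \<in> menus X \<and> B \<in> menus X \<and> A \<inter> Y = B \<inter> Y \<and>
      A \<inter> Y \<noteq> {} \<and> A \<inter> Y' = B \<inter> Y' \<and> A \<inter> Y' \<noteq> {}"
    then have H: "A \<in> menus X" "B \<in> menus X" "Y \<subseteq> X" "Y' \<subseteq> X" "A \<inter> Y \<noteq> {}"
      "A \<inter> Y' \<noteq> {}" "B \<inter> Y \<noteq> {}" "B \<inter> Y' \<noteq> {}"
      using QX by auto
    show "((\<lambda>x. (ln (ratio (p x) A Y Y') - ln (ratio (p x) B Y Y'))\<^sup>2) \<longlongrightarrow>
           (ln (ratio (nsc P v u) A Y Y') - ln (ratio (nsc P v u) B Y Y'))\<^sup>2) F"
      by (intro tendsto_power tendsto_diff L) (use H in auto)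
  qed
  show ?thesis unfolding D_def by (rule tendsto_add[OF T1 T2])
qed

lemma eventually_better:
  assumes finX: "finite X" and part: "partition_on X P" and K2: "card P \<ge> 2"
    and upos: "\<forall>a\<in>X. u a > 0"
    and v0: "v {} = 0"
    and pos: "\<forall>A\<in>menus X. \<forall>a\<in>A. nsc P v u a A > 0"
    and nondeg: "nondegenerate P v u"
    and A1: "assumption1 X P (nsc P v u)"
    and lim: "\<forall>A\<in>menus X. \<forall>a\<in>X. ((\<lambda>x. p x a A) \<longlongrightarrow> nsc P v u a A) F"
  shows "eventually (\<lambda>x. \<forall>Q. partition_on X Q \<and> Q \<noteq> P \<longrightarrow> D X (p x) P < D X (p x) Q) F"
proof -
  let ?S = "{Q. partition_on X Q \<and> Q \<noteq> P}"
  have fin: "finite ?S"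
    by (rule finite_subset[of _ "Pow (Pow X)"]) (use finX in \<open>auto simp: partition_on_def\<close>)
  have "\<forall>Q\<in>?S. eventually (\<lambda>x. D X (p x) P < D X (p x) Q) F"
  proof
    fix Q assume Q: "Q \<in> ?S"
    have t1: "((\<lambda>x. D X (p x) P) \<longlongrightarrow> D X (nsc P v u) P) F"
      by (rule D_tendsto[OF finX pos lim part])
    have t2: "((\<lambda>x. D X (p x) Q) \<longlongrightarrow> D X (nsc P v u) Q) F"
      by (rule D_tendsto[OF finX pos lim]) (use Q in simp)
    have z: "D X (nsc P v u) P = 0" by (rule D_true_zero[OF finX part upos v0 pos])
    have d: "D X (nsc P v u) Q > 0"
      by (rule D_other_pos[OF finX part K2 upos v0 pos nondeg A1]) (use Q in auto)
    have "((\<lambda>x. D X (p x) Q - D X (p x) P) \<longlongrightarrow> D X (nsc P v u) Q - D X (nsc P v u) P) F"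
      by (rule tendsto_diff[OF t2 t1])
    then have "eventually (\<lambda>x. 0 < D X (p x) Q - D X (p x) P) F"
      by (rule order_tendstoD) (use z d in simp)
    then show "eventually (\<lambda>x. D X (p x) P < D X (p x) Q) F"
      by (rule eventually_mono) simp
  qed
  from eventually_ball_finite[OF fin this] show ?thesis
    by (rule eventually_mono) auto
qed



theorem proposition4:
  fixes X :: "'a set" and P :: "'a set set"
    and v :: "'a set \<Rightarrow> real" and u :: "'a \<Rightarrow> real"
    and M :: "'w measure" and xi :: "'a set \<Rightarrow> nat \<Rightarrow> 'w \<Rightarrow> 'a"
  assumes finX: "finite X"
    and part: "partition_on X P"
    and K2: "card P \<ge> 2"
    and upos: "\<forall>a\<in>X. u a > 0"
    and v0: "v {} = 0"
    and pbar_pos: "\<forall>A\<in>menus X. \<forall>a\<in>A. nsc P v u a A > 0"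
    and nondeg: "nondegenerate P v u"
    and A1: "assumption1 X P (nsc P v u)"
    and prob: "prob_space M"
    and indep: "prob_space.indep_vars M (\<lambda>_. count_space X) (\<lambda>(A, n). xi A n) (menus X \<times> UNIV)"
    and distr: "\<forall>A\<in>menus X. \<forall>n. \<forall>a\<in>A.
                  measure M {w \<in> space M. xi A n w = a} = nsc P v u a A"
  shows "AE w in M. \<exists>N0. \<forall>N :: 'a set \<Rightarrow> nat. (\<forall>A\<in>menus X. N A \<ge> N0) \<longrightarrow>
           (\<forall>Q. partition_on X Q \<and> Q \<noteq> P \<longrightarrow> D X (freq xi N w) P < D X (freq xi N w) Q)"
proof -
  interpret prob_space M by (rule prob)
  let ?p = "nsc P v u"
  have finM: "finite (menus X)" by (rule menus_finite[OF finX])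
  have rv: "xi A n \<in> measurable M (count_space X)" if "A \<in> menus X" for A n
  proof -
    have "(\<lambda>(A, n). xi A n) (A, n) \<in> measurable M (count_space X)"
      using indep that unfolding indep_vars_def by blast
    then show ?thesis by simp
  qed
  have Esets: "{w \<in> space M. xi A n w = b} \<in> sets M" if "A \<in> menus X" for A n b
  proof -
    have "{w \<in> space M. xi A n w = b} = xi A n -` ({b} \<inter> X) \<inter> space M"
      using measurable_space[OF rv[OF that]] by auto
    also have "\<dots> \<in> sets M"
      by (rule measurable_sets[OF rv[OF that]]) auto
    finally show ?thesis .
  qed
  have meas: "measure M {w \<in> space M. xi A n w = a} = ?p a A" if A: "A \<in> menus X" and a: "a \<in> X" for A n a
  proof (cases "a \<in> A")
    case True then show ?thesis using distr A by auto
  next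
    case False
    define E where "E = (\<lambda>b. {w \<in> space M. xi A n w = b})"
    have AX: "A \<subseteq> X" using A by (auto simp: menus_def)
    have finA: "finite A" using finite_subset[OF AX finX] .
    have U: "measure M (\<Union>b\<in>A. E b) = (\<Sum>b\<in>A. measure M (E b))"
      by (rule finite_measure_finite_Union[OF finA]) (auto simp: E_def Esets[OF A] disjoint_family_on_def)
    also have "\<dots> = (\<Sum>b\<in>A. ?p b A)"
      using distr A by (auto simp: E_def intro!: sum.cong)
    also have "\<dots> = 1" by (rule nsc_sum_one[OF finX part upos v0 pbar_pos A])
    finally have U1: "measure M (\<Union>b\<in>A. E b) = 1" .
    have Usets: "(\<Union>b\<in>A. E b) \<in> sets M" using finA by (auto simp: E_def Esets[OF A])
    have "measure M (E a \<union> (\<Union>b\<in>A. E b)) = measure M (E a) + measure M (\<Union>b\<in>A. E b)"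
      by (rule finite_measure_Union) (use Esets[OF A] Usets False in \<open>auto simp: E_def\<close>)
    moreover have "measure M (E a \<union> (\<Union>b\<in>A. E b)) \<le> 1" by (rule prob_le_1)
    ultimately have "measure M (E a) \<le> 0" using U1 by simp
    then have "measure M (E a) = 0" using measure_nonneg[of M "E a"] by linarith
    then show ?thesis using False by (simp add: E_def nsc_def)
  qed
  have slln: "AE w in M. (\<lambda>n. real (card {k. k < n \<and> xi A k w = a}) / real n) \<longlonglongrightarrow> ?p a A"
    if A: "A \<in> menus X" and a: "a \<in> X" for A a
  proof -
    have "AE w in M. (\<lambda>n. real (card {k. k < n \<and> (\<lambda>(A, n). xi A n) ((\<lambda>n. (A, n)) k) w = a}) / real n)
            \<longlonglongrightarrow> ?p a A"
      by (rule slln_indicator[OF prob indep]) (use A meas[OF A a] in \<open>auto simp: inj_def\<close>)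
    then show ?thesis by simp
  qed
  have AEall: "AE w in M. \<forall>A\<in>menus X. \<forall>a\<in>X.
      (\<lambda>n. real (card {k. k < n \<and> xi A k w = a}) / real n) \<longlonglongrightarrow> ?p a A"
    by (intro AE_finite_allI[OF finM] AE_finite_allI[OF finX] slln)
  then show ?thesis
  proof (rule AE_mp, intro AE_I2 impI)
    fix w
    assume conv: "\<forall>A\<in>menus X. \<forall>a\<in>X.
      (\<lambda>n. real (card {k. k < n \<and> xi A k w = a}) / real n) \<longlonglongrightarrow> ?p a A"
    define mn where "mn = (\<lambda>N :: 'a set \<Rightarrow> nat. Min ((\<lambda>A. N A) ` menus X))"
    define F where "F = filtercomap mn at_top"
    have NA: "filterlim (\<lambda>N. N A) at_top F" if A: "A \<in> menus X" for A
      unfolding filterlim_at_top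
    proof
      fix Z :: nat
      show "eventually (\<lambda>N. Z \<le> N A) F"
        unfolding F_def eventually_filtercomap
      proof (intro exI conjI allI impI)
        show "eventually (\<lambda>m. Z \<le> m) at_top" by (rule eventually_ge_at_top)
        fix N :: "'a set \<Rightarrow> nat" assume "Z \<le> mn N"
        moreover have "mn N \<le> N A" unfolding mn_def using finM A by (intro Min_le) auto
        ultimately show "Z \<le> N A" by linarith
      qed
    qed
    have lim: "\<forall>A\<in>menus X. \<forall>a\<in>X. ((\<lambda>N. freq xi N w a A) \<longlongrightarrow> ?p a A) F"
    proof (intro ballI)
      fix A a assume A: "A \<in> menus X" and a: "a \<in> X"
      have "((\<lambda>N. real (card {k. k < N A \<and> xi A k w = a}) / real (N A)) \<longlongrightarrow> ?p a A) F"
        by (rule filterlim_compose[OF conv[rule_format, OF A a] NA[OF A]])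
      then show "((\<lambda>N. freq xi N w a A) \<longlongrightarrow> ?p a A) F" by (simp add: freq_def)
    qed
    have ev: "eventually (\<lambda>N. \<forall>Q. partition_on X Q \<and> Q \<noteq> P \<longrightarrow> D X (freq xi N w) P < D X (freq xi N w) Q) F"
      by (rule eventually_better[OF finX part K2 upos v0 pbar_pos nondeg A1 lim])
    then obtain R where R: "eventually R at_top"
      and RI: "\<And>N. R (mn N) \<Longrightarrow> \<forall>Q. partition_on X Q \<and> Q \<noteq> P \<longrightarrow> D X (freq xi N w) P < D X (freq xi N w) Q"
      unfolding F_def eventually_filtercomap by blast
    obtain N0 where N0: "\<And>n. n \<ge> N0 \<Longrightarrow> R n" using R unfolding eventually_at_top_linorder by blast
    have Mne: "menus X \<noteq> {}"
    proof -
      have "P \<noteq> {}" using K2 by auto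
      then obtain Y where Y: "Y \<in> P" by blast
      then have "Y \<noteq> {}" "Y \<subseteq> X" using part by (auto simp: partition_on_def)
      then have "Y \<in> menus X" by (simp add: menus_def)
      then show ?thesis by blast
    qed
    show "\<exists>N0. \<forall>N :: 'a set \<Rightarrow> nat. (\<forall>A\<in>menus X. N A \<ge> N0) \<longrightarrow>
           (\<forall>Q. partition_on X Q \<and> Q \<noteq> P \<longrightarrow> D X (freq xi N w) P < D X (freq xi N w) Q)"
    proof (rule exI[of _ N0], rule allI, rule impI)
      fix N :: "'a set \<Rightarrow> nat" assume H: "\<forall>A\<in>menus X. N A \<ge> N0"
      have "mn N \<ge> N0" unfolding mn_def using finM Mne H by (subst Min_ge_iff) auto
      then show "\<forall>Q. partition_on X Q \<and> Q \<noteq> P \<longrightarrow> D X (freq xi N w) P < D X (freq xi N w) Q"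
        using RI N0 by blast
    qed
  qed
qed


end
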